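(* Let $w\in S_n$ be minimal non-separable. If $w(1)<w(n)$, then $w(i)>w(n)$ for $2\leq i\leq n+1-w(n)$; $w(1)<w(i)<w(n)$ for $n+2-w(n)\leq i\leq n-w(1)$; and $w(i)<w(1)$ for $n-w(1)+1\leq i\leq n-1$. Likewise, if $w(1)>w(n)$, then $w(i)<w(n)$ for $2\leq i\leq w(n)$; $w(n)<w(i)<w(1)$ for $w(n)+1\leq i\leq w(1)-1$; and $w(i)>w(1)$ for $w(1)\leq i\leq n-1$.
   Context: A permutation $w\in S_n$ is separable if it avoids the patterns $3142$ and $2413$: there are no indices $i_1<i_2<i_3<i_4$ such that $w(i_1)w(i_2)w(i_3)w(i_4)$ is in the same relative order as $3142$ or $2413$. For $J\subsetneq\{1,\dots,n-1\}$ (indexing the adjacent transpositions $s_i=(i,i+1)$), partition $\{1,\dots,n\}$ into maximal blocks of consecutive positions where $i$ and $i+1$ lie in the same block iff $i\in J$; $w_J$ (the component of $w$ in the parabolic subgroup $W_J$ in the factorization $w=w^Jw_J$) is separable iff for each block, the sequence of values of $w$ on that block, standardized to a permutation, is separable. $w$ is minimal non-separable if $w$ is not separable but $w_J$ is separable for every $J\subsetneq\{1,\dots,n-1\}$. *)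

theory Defs
  imports "HOL-Combinatorics.Permutations"
begin

text \<open>Permutations of S_n are functions w with w permutes {1..n}; one-line notation
  is the list of values at positions 1..n.\<close>

definition pat3142 :: "nat list \<Rightarrow> bool" where
  "pat3142 xs \<longleftrightarrow> (\<exists>i1 i2 i3 i4. i1 < i2 \<and> i2 < i3 \<and> i3 < i4 \<and> i4 < length xs \<and>
      xs!i2 < xs!i4 \<and> xs!i4 < xs!i1 \<and> xs!i1 < xs!i3)"

definition pat2413 :: "nat list \<Rightarrow> bool" where
  "pat2413 xs \<longleftrightarrow> (\<exists>i1 i2 i3 i4. i1 < i2 \<and> i2 < i3 \<and> i3 < i4 \<and> i4 < length xs \<and>
      xs!i3 < xs!i1 \<and> xs!i1 < xs!i4 \<and> xs!i4 < xs!i2)"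

definition separable_list :: "nat list \<Rightarrow> bool" where
  "separable_list xs \<longleftrightarrow> \<not> pat3142 xs \<and> \<not> pat2413 xs"

definition separable :: "nat \<Rightarrow> (nat \<Rightarrow> nat) \<Rightarrow> bool" where
  "separable n w \<longleftrightarrow> separable_list (map w [1..<n+1])"

definition standardize :: "nat list \<Rightarrow> nat list" where
  "standardize xs = map (\<lambda>x. card {y \<in> set xs. y \<le> x}) xs"

text \<open>Maximal block [a..b] of {1..n} determined by J: i, i+1 in the same block iff i \<in> J.\<close>
definition is_block :: "nat \<Rightarrow> nat set \<Rightarrow> nat \<Rightarrow> nat \<Rightarrow> bool" where
  "is_block n J a b \<longleftrightarrow> 1 \<le> a \<and> a \<le> b \<and> b \<le> n \<and> (\<forall>i. a \<le> i \<and> i < b \<longrightarrow> i \<in> J)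
     \<and> (a = 1 \<or> a - 1 \<notin> J) \<and> (b = n \<or> b \<notin> J)"

definition parabolic_separable :: "nat \<Rightarrow> (nat \<Rightarrow> nat) \<Rightarrow> nat set \<Rightarrow> bool" where
  "parabolic_separable n w J \<longleftrightarrow>
     (\<forall>a b. is_block n J a b \<longrightarrow> separable_list (standardize (map w [a..<b+1])))"

definition min_nonseparable :: "nat \<Rightarrow> (nat \<Rightarrow> nat) \<Rightarrow> bool" where
  "min_nonseparable n w \<longleftrightarrow> w permutes {1..n} \<and> \<not> separable n w \<and>
     (\<forall>J. J \<subset> {1..n-1} \<longrightarrow> parabolic_separable n w J)"

end

theory Submission
  imports Defs
begin

lemma std_less:
  fixes xs :: "nat list"
  assumes "x \<in> set xs" "y \<in> set xs"
  shows "card {z\<in>set xs. z \<le> x} < card {z \<in> set xs. z \<le> y} \<longleftrightarrow> x < y"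
proof
  assume "x<y"
  then have "{z\<in>set xs. z \<le> x} \<subseteq> {z \<in> set xs. z \<le> y}" "y \<in> {z \<in> set xs. z \<le> y}"
    "y \<notin> {z\<in>set xs. z \<le> x}" using assms by auto
  then have "{z\<in>set xs. z \<le> x} \<subset> {z \<in> set xs. z \<le> y}" by blast
  then show "card {z\<in>set xs. z \<le> x} < card {z \<in> set xs. z \<le> y}" by (simp add: psubset_card_mono)
next
  assume c: "card {z\<in>set xs. z \<le> x} < card {z \<in> set xs. z \<le> y}"
  show "x<y"
  proof (rule ccontr)
    assume "\<not> x<y"
    then have "{z \<in> set xs. z \<le> y} \<subseteq> {z\<in>set xs. z \<le> x}" by auto
    then have "card {z \<in> set xs. z \<le> y} \<le> card {z\<in>set xs. z \<le> x}" by (simp add: card_mono)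
    with c show False by simp
  qed
qed

lemma std_nth_less:
  assumes "i < length xs" "j < length xs"
  shows "(standardize xs ! i < standardize xs ! j) = (xs!i < xs!j)"
  using assms std_less[OF nth_mem nth_mem] by (simp add: standardize_def)

lemma pat_std: "pat3142 (standardize xs) = pat3142 xs" "pat2413 (standardize xs) = pat2413 xs"
proof -
  have L: "length (standardize xs) = length xs" by (simp add: standardize_def)
  have E: "\<And>i1 i2 i3 i4. i1 < i2 \<Longrightarrow> i2 < i3 \<Longrightarrow> i3 < i4 \<Longrightarrow> i4 < length xs \<Longrightarrow>
     (standardize xs ! i1 < standardize xs ! i2 \<longleftrightarrow> xs ! i1 < xs ! i2) \<and>
     (standardize xs ! i1 < standardize xs ! i3 \<longleftrightarrow> xs ! i1 < xs ! i3) \<and>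
     (standardize xs ! i1 < standardize xs ! i4 \<longleftrightarrow> xs ! i1 < xs ! i4) \<and>
     (standardize xs ! i2 < standardize xs ! i1 \<longleftrightarrow> xs ! i2 < xs ! i1) \<and>
     (standardize xs ! i2 < standardize xs ! i3 \<longleftrightarrow> xs ! i2 < xs ! i3) \<and>
     (standardize xs ! i2 < standardize xs ! i4 \<longleftrightarrow> xs ! i2 < xs ! i4) \<and>
     (standardize xs ! i3 < standardize xs ! i1 \<longleftrightarrow> xs ! i3 < xs ! i1) \<and>
     (standardize xs ! i3 < standardize xs ! i2 \<longleftrightarrow> xs ! i3 < xs ! i2) \<and>
     (standardize xs ! i3 < standardize xs ! i4 \<longleftrightarrow> xs ! i3 < xs ! i4) \<and>
     (standardize xs ! i4 < standardize xs ! i1 \<longleftrightarrow> xs ! i4 < xs ! i1) \<and>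
     (standardize xs ! i4 < standardize xs ! i2 \<longleftrightarrow> xs ! i4 < xs ! i2) \<and>
     (standardize xs ! i4 < standardize xs ! i3 \<longleftrightarrow> xs ! i4 < xs ! i3)"
    by (simp add: std_nth_less)
  show "pat3142 (standardize xs) = pat3142 xs"
    unfolding pat3142_def L
  proof
    assume "\<exists>i1 i2 i3 i4. i1 < i2 \<and> i2 < i3 \<and> i3 < i4 \<and> i4 < length xs \<and> (standardize xs) ! i2 < (standardize xs) ! i4 \<and> (standardize xs) ! i4 < (standardize xs) ! i1 \<and> (standardize xs) ! i1 < (standardize xs) ! i3"
    then obtain i1 i2 i3 i4 where g: "i1<i2" "i2<i3" "i3<i4" "i4<length xs" and h: "(standardize xs) ! i2 < (standardize xs) ! i4 \<and> (standardize xs) ! i4 < (standardize xs) ! i1 \<and> (standardize xs) ! i1 < (standardize xs) ! i3" by blast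
    have lt: "i1 < length xs" "i2 < length xs" "i3 < length xs" using g by simp_all
    have "(xs) ! i2 < (xs) ! i4 \<and> (xs) ! i4 < (xs) ! i1 \<and> (xs) ! i1 < (xs) ! i3" using h by (simp add: std_nth_less lt g(4))
    then show "\<exists>i1 i2 i3 i4. i1 < i2 \<and> i2 < i3 \<and> i3 < i4 \<and> i4 < length xs \<and> (xs) ! i2 < (xs) ! i4 \<and> (xs) ! i4 < (xs) ! i1 \<and> (xs) ! i1 < (xs) ! i3" using g by blast
  next
    assume "\<exists>i1 i2 i3 i4. i1 < i2 \<and> i2 < i3 \<and> i3 < i4 \<and> i4 < length xs \<and> (xs) ! i2 < (xs) ! i4 \<and> (xs) ! i4 < (xs) ! i1 \<and> (xs) ! i1 < (xs) ! i3"
    then obtain i1 i2 i3 i4 where g: "i1<i2" "i2<i3" "i3<i4" "i4<length xs" and h: "(xs) ! i2 < (xs) ! i4 \<and> (xs) ! i4 < (xs) ! i1 \<and> (xs) ! i1 < (xs) ! i3" by blast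
    have lt: "i1 < length xs" "i2 < length xs" "i3 < length xs" using g by simp_all
    have "(standardize xs) ! i2 < (standardize xs) ! i4 \<and> (standardize xs) ! i4 < (standardize xs) ! i1 \<and> (standardize xs) ! i1 < (standardize xs) ! i3" using h by (simp add: std_nth_less lt g(4))
    then show "\<exists>i1 i2 i3 i4. i1 < i2 \<and> i2 < i3 \<and> i3 < i4 \<and> i4 < length xs \<and> (standardize xs) ! i2 < (standardize xs) ! i4 \<and> (standardize xs) ! i4 < (standardize xs) ! i1 \<and> (standardize xs) ! i1 < (standardize xs) ! i3" using g by blast
  qed
  show "pat2413 (standardize xs) = pat2413 xs"
    unfolding pat2413_def L
  proof
    assume "\<exists>i1 i2 i3 i4. i1 < i2 \<and> i2 < i3 \<and> i3 < i4 \<and> i4 < length xs \<and> (standardize xs) ! i3 < (standardize xs) ! i1 \<and> (standardize xs) ! i1 < (standardize xs) ! i4 \<and> (standardize xs) ! i4 < (standardize xs) ! i2"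
    then obtain i1 i2 i3 i4 where g: "i1<i2" "i2<i3" "i3<i4" "i4<length xs" and h: "(standardize xs) ! i3 < (standardize xs) ! i1 \<and> (standardize xs) ! i1 < (standardize xs) ! i4 \<and> (standardize xs) ! i4 < (standardize xs) ! i2" by blast
    have lt: "i1 < length xs" "i2 < length xs" "i3 < length xs" using g by simp_all
    have "(xs) ! i3 < (xs) ! i1 \<and> (xs) ! i1 < (xs) ! i4 \<and> (xs) ! i4 < (xs) ! i2" using h by (simp add: std_nth_less lt g(4))
    then show "\<exists>i1 i2 i3 i4. i1 < i2 \<and> i2 < i3 \<and> i3 < i4 \<and> i4 < length xs \<and> (xs) ! i3 < (xs) ! i1 \<and> (xs) ! i1 < (xs) ! i4 \<and> (xs) ! i4 < (xs) ! i2" using g by blast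
  next
    assume "\<exists>i1 i2 i3 i4. i1 < i2 \<and> i2 < i3 \<and> i3 < i4 \<and> i4 < length xs \<and> (xs) ! i3 < (xs) ! i1 \<and> (xs) ! i1 < (xs) ! i4 \<and> (xs) ! i4 < (xs) ! i2"
    then obtain i1 i2 i3 i4 where g: "i1<i2" "i2<i3" "i3<i4" "i4<length xs" and h: "(xs) ! i3 < (xs) ! i1 \<and> (xs) ! i1 < (xs) ! i4 \<and> (xs) ! i4 < (xs) ! i2" by blast
    have lt: "i1 < length xs" "i2 < length xs" "i3 < length xs" using g by simp_all
    have "(standardize xs) ! i3 < (standardize xs) ! i1 \<and> (standardize xs) ! i1 < (standardize xs) ! i4 \<and> (standardize xs) ! i4 < (standardize xs) ! i2" using h by (simp add: std_nth_less lt g(4))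
    then show "\<exists>i1 i2 i3 i4. i1 < i2 \<and> i2 < i3 \<and> i3 < i4 \<and> i4 < length xs \<and> (standardize xs) ! i3 < (standardize xs) ! i1 \<and> (standardize xs) ! i1 < (standardize xs) ! i4 \<and> (standardize xs) ! i4 < (standardize xs) ! i2" using g by blast
  qed
qed

lemma map_upt_nth: "i < b+1-a \<Longrightarrow> map w [a..<b+1] ! i = w (a+i)"
  by (simp del: upt_Suc)
lemma map_upt_len: "length (map w [a..<b+1]) = b+1-a"
  by (simp del: upt_Suc)

lemma pat_map_gen:
  "(\<exists>i1 i2 i3 i4. i1<i2 \<and> i2<i3 \<and> i3<i4 \<and> i4 < length (map w [a..<b+1]) \<and>
     Q (map w [a..<b+1]!i1) (map w [a..<b+1]!i2) (map w [a..<b+1]!i3) (map w [a..<b+1]!i4))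
   \<longleftrightarrow> (\<exists>i1 i2 i3 i4. a \<le> i1 \<and> i1<i2 \<and> i2<i3 \<and> i3<i4 \<and> i4 \<le> b \<and> Q (w i1) (w i2) (w i3) (w i4))"
proof
  assume "\<exists>i1 i2 i3 i4. i1<i2 \<and> i2<i3 \<and> i3<i4 \<and> i4 < length (map w [a..<b+1]) \<and>
     Q (map w [a..<b+1]!i1) (map w [a..<b+1]!i2) (map w [a..<b+1]!i3) (map w [a..<b+1]!i4)"
  then obtain i1 i2 i3 i4 where g: "i1<i2" "i2<i3" "i3<i4" "i4 < length (map w [a..<b+1])"
     "Q (map w [a..<b+1]!i1) (map w [a..<b+1]!i2) (map w [a..<b+1]!i3) (map w [a..<b+1]!i4)" by blast
  have l: "i4 < b+1-a" using g(4) map_upt_len by metis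
  have e: "map w [a..<b+1]!i1 = w (a+i1)" "map w [a..<b+1]!i2 = w (a+i2)"
    "map w [a..<b+1]!i3 = w (a+i3)" "map w [a..<b+1]!i4 = w (a+i4)"
    using l g(1-3) by (intro map_upt_nth; linarith)+
  show "\<exists>i1 i2 i3 i4. a \<le> i1 \<and> i1<i2 \<and> i2<i3 \<and> i3<i4 \<and> i4 \<le> b \<and> Q (w i1) (w i2) (w i3) (w i4)"
    apply (rule exI[of _ "a+i1"], rule exI[of _ "a+i2"], rule exI[of _ "a+i3"], rule exI[of _ "a+i4"])
    using g(1-3,5) l unfolding e by simp
next
  assume "\<exists>i1 i2 i3 i4. a \<le> i1 \<and> i1<i2 \<and> i2<i3 \<and> i3<i4 \<and> i4 \<le> b \<and> Q (w i1) (w i2) (w i3) (w i4)"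
  then obtain i1 i2 i3 i4 where g: "a \<le> i1" "i1<i2" "i2<i3" "i3<i4" "i4 \<le> b" "Q (w i1) (w i2) (w i3) (w i4)"
    by blast
  have e: "map w [a..<b+1]!(i1-a) = w i1" "map w [a..<b+1]!(i2-a) = w i2"
    "map w [a..<b+1]!(i3-a) = w i3" "map w [a..<b+1]!(i4-a) = w i4"
    using g(1-5) by (subst map_upt_nth; simp)+
  have ar: "i1-a<i2-a" "i2-a<i3-a" "i3-a<i4-a" "i4-a < b+1-a" using g by arith+
  show "\<exists>i1 i2 i3 i4. i1<i2 \<and> i2<i3 \<and> i3<i4 \<and> i4 < length (map w [a..<b+1]) \<and>
     Q (map w [a..<b+1]!i1) (map w [a..<b+1]!i2) (map w [a..<b+1]!i3) (map w [a..<b+1]!i4)"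
    apply (rule exI[of _ "i1-a"], rule exI[of _ "i2-a"], rule exI[of _ "i3-a"], rule exI[of _ "i4-a"])
    unfolding e map_upt_len using g ar by simp
qed

lemma pat_map:
  "pat3142 (map w [a..<b+1]) \<longleftrightarrow> (\<exists>i1 i2 i3 i4. a \<le> i1 \<and> i1<i2 \<and> i2<i3 \<and> i3<i4 \<and> i4 \<le> b \<and>
      w i2 < w i4 \<and> w i4 < w i1 \<and> w i1 < w i3)"
  "pat2413 (map w [a..<b+1]) \<longleftrightarrow> (\<exists>i1 i2 i3 i4. a \<le> i1 \<and> i1<i2 \<and> i2<i3 \<and> i3<i4 \<and> i4 \<le> b \<and>
      w i3 < w i1 \<and> w i1 < w i4 \<and> w i4 < w i2)"
  unfolding pat3142_def pat2413_def
  using pat_map_gen[where Q="\<lambda>x1 x2 x3 x4. x2 < x4 \<and> x4 < x1 \<and> x1 < x3"]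
    pat_map_gen[where Q="\<lambda>x1 x2 x3 x4. x3 < x1 \<and> x1 < x4 \<and> x4 < x2"]
  by (simp_all del: upt_Suc)


definition noPat :: "nat \<Rightarrow> (nat \<Rightarrow> nat) \<Rightarrow> bool" where
  "noPat n w \<longleftrightarrow> (\<forall>i1 i2 i3 i4. 1 \<le> i1 \<and> i1<i2 \<and> i2<i3 \<and> i3<i4 \<and> i4 \<le> n \<and> (i1 \<noteq> 1 \<or> i4 \<noteq> n) \<longrightarrow>
     \<not>(w i2 < w i4 \<and> w i4 < w i1 \<and> w i1 < w i3) \<and> \<not>(w i3 < w i1 \<and> w i1 < w i4 \<and> w i4 < w i2))"

lemma core:
  assumes inj: "inj_on w {1..n}" and rng: "\<And>i. i \<in> {1..n} \<Longrightarrow> w i \<in> {1..n}" and np: "noPat n w"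
    and o: "1<j0" "j0<k0" "k0<n" "w k0 < w 1" "w 1 < w n" "w n < w j0"
  shows "(\<forall>i. 2 \<le> i \<and> i \<le> n + 1 - w n \<longrightarrow> w i > w n) \<and>
         (\<forall>i. n + 2 - w n \<le> i \<and> i \<le> n - w 1 \<longrightarrow> w 1 < w i \<and> w i < w n) \<and>
         (\<forall>i. n - w 1 + 1 \<le> i \<and> i \<le> n - 1 \<longrightarrow> w i < w 1)"
proof -
  define a where "a = w 1"
  define b where "b = w n"
  have P: "\<And>i1 i2 i3 i4. 1 \<le> i1 \<Longrightarrow> i1<i2 \<Longrightarrow> i2<i3 \<Longrightarrow> i3<i4 \<Longrightarrow> i4 \<le> n \<Longrightarrow> (i1 \<noteq> 1 \<or> i4 \<noteq> n) \<Longrightarrow>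
     \<not>(w i2 < w i4 \<and> w i4 < w i1 \<and> w i1 < w i3) \<and> \<not>(w i3 < w i1 \<and> w i1 < w i4 \<and> w i4 < w i2)"
    using np unfolding noPat_def by blast
  have A1: False if "2 \<le> i1" "i1<i2" "i2<i3" "i3<i4" "i4 \<le> n" "w i2 < w i4" "w i4 < w i1" "w i1 < w i3" for i1 i2 i3 i4
    using P[of i1 i2 i3 i4] that by auto
  have A2: False if "2 \<le> i1" "i1<i2" "i2<i3" "i3<i4" "i4 \<le> n" "w i3 < w i1" "w i1 < w i4" "w i4 < w i2" for i1 i2 i3 i4
    using P[of i1 i2 i3 i4] that by auto
  have B1: False if "1 \<le> i1" "i1<i2" "i2<i3" "i3<i4" "i4 < n" "w i2 < w i4" "w i4 < w i1" "w i1 < w i3" for i1 i2 i3 i4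
    using P[of i1 i2 i3 i4] that by auto
  have B2: False if "1 \<le> i1" "i1<i2" "i2<i3" "i3<i4" "i4 < n" "w i3 < w i1" "w i1 < w i4" "w i4 < w i2" for i1 i2 i3 i4
    using P[of i1 i2 i3 i4] that by auto
  have sub0: "w ` {1..n} \<subseteq> {1..n}" using rng by blast
  have surj: "w ` {1..n} = {1..n}" using endo_inj_surj[OF _ sub0 inj] by simp
  have wne: "\<And>p q. p \<in> {1..n} \<Longrightarrow> q \<in> {1..n} \<Longrightarrow> p \<noteq> q \<Longrightarrow> w p \<noteq> w q"
    using inj unfolding inj_on_def by blast
  have ab: "a < b" using o a_def b_def by simp
  have a1: "1 \<le> a" using rng[of 1] o unfolding a_def by auto
  have bn: "b \<le> n" using rng[of n] o unfolding b_def by auto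
  have ne: "\<And>i. 2 \<le> i \<Longrightarrow> i \<le> n-1 \<Longrightarrow> w i \<noteq> a \<and> w i \<noteq> b"
  proof -
    fix i assume i: "2 \<le> i" "i \<le> n-1"
    have m: "i \<in> {1..n}" "1 \<in> {1..n}" "n \<in> {1..n}" "i \<noteq> 1" "i \<noteq> n" using i o by auto
    show "w i \<noteq> a \<and> w i \<noteq> b" unfolding a_def b_def using wne[OF m(1) m(2) m(4)] wne[OF m(1) m(3) m(5)] by blast
  qed
  have H: "False" if h: "2\<le>i" "i<j" "j\<le>n-1" "w i < a" "w j > b" for i j
  proof -
    consider "j0 < i" | "j0 = i" | "i < j0" by arith
    then show False
    proof cases
      case 1
      show False
      proof (cases "w j0 < w j")
        case True show False by (rule A1[of j0 i j n]) (use h 1 o True a_def b_def in linarith)+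
      next
        case False
        moreover have jn: "j \<in> {1..n}" "j0 \<in> {1..n}" "j \<noteq> j0" using h 1 o by auto
        ultimately have "w j < w j0" using wne[OF jn] by linarith
        show False by (rule B2[of 1 j0 i j]) (use h 1 o \<open>w j < w j0\<close> a_def b_def in linarith)+
      qed
    next
      case 2 then show False using h o a_def b_def by auto
    next
      case 3
      show False
      proof (cases "w k0 < w i")
        case True show False by (rule A2[of i j0 k0 n]) (use h 3 o True a_def b_def in linarith)+
      next
        case False
        moreover have jn: "i \<in> {1..n}" "k0 \<in> {1..n}" "i \<noteq> k0" using h 3 o by auto
        ultimately have "w i < w k0" using wne[OF jn] by linarith
        show False by (rule B1[of 1 i j0 k0]) (use h 3 o \<open>w i < w k0\<close> a_def b_def in linarith)+
      qed
    qed
  qed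
  have M1: "j0 < i \<and> i < k0" if h: "2\<le>i" "i\<le>n-1" "a < w i" "w i < b" for i
  proof -
    have "i \<noteq> j0" "i \<noteq> k0" using h o a_def b_def by auto
    moreover have "\<not> i < j0"
    proof
      assume c: "i < j0"
      show False by (rule A2[of i j0 k0 n]) (use h c o a_def b_def in linarith)+
    qed
    moreover have "\<not> k0 < i"
    proof
      assume c: "k0 < i"
      show False by (rule B2[of 1 j0 k0 i]) (use h c o a_def b_def in linarith)+
    qed
    ultimately show ?thesis by auto
  qed
  have HM: "False" if h: "2\<le>i" "i<j" "j\<le>n-1" "a < w i" "w i < b" "w j > b" for i j
  proof -
    have m: "j0 < i" "i < k0" proof -
      have "i \<le> n-1" using h by linarith
      then show "j0 < i" "i < k0" using M1[of i] h by auto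
    qed
    consider "j < k0" | "j = k0" | "k0 < j" by arith
    then show False
    proof cases
      case 1 show False by (rule A2[of i j k0 n]) (use h 1 m o a_def b_def in linarith)+
    next
      case 2 then show False using h o a_def b_def by auto
    next
      case 3 show False by (rule H[of k0 j]) (use 3 h o a_def b_def in linarith)+
    qed
  qed
  have MLo: "False" if h: "2\<le>i" "i<j" "j\<le>n-1" "w i < a" "a < w j" "w j < b" for i j
  proof -
    have m: "j0 < j" "j < k0" using M1[of j] h by linarith+
    consider "j0 < i" | "j0 = i" | "i < j0" by arith
    then show False
    proof cases
      case 1 show False by (rule B2[of 1 j0 i j]) (use h 1 m o a_def b_def in linarith)+
    next
      case 2 then show False using h o a_def b_def by auto
    next
      case 3 show False by (rule H[of i j0]) (use 3 h m o a_def b_def in linarith)+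
    qed
  qed
  have O1: "False" if h: "2\<le>p" "p<q" "q\<le>n-1" "w q > b" "w p \<le> b" for p q
  proof -
    have "w p \<noteq> a" "w p \<noteq> b" using ne[of p] h by auto
    then consider "w p < a" | "a < w p \<and> w p < b" using h by linarith
    then show False
    proof cases
      case 1 show False by (rule H[of p q]) (use 1 h in linarith)+
    next
      case 2 show False by (rule HM[of p q]) (use 2 h in linarith)+
    qed
  qed
  have O2: "False" if h: "2\<le>p" "p<q" "q\<le>n-1" "w p < a" "w q \<ge> a" for p q
  proof -
    have "w q \<noteq> a" "w q \<noteq> b" using ne[of q] h by auto
    then consider "b < w q" | "a < w q \<and> w q < b" using h by linarith
    then show False
    proof cases
      case 1 show False by (rule H[of p q]) (use 1 h in linarith)+
    next
      case 2 show False by (rule MLo[of p q]) (use 2 h in linarith)+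
    qed
  qed
  have part1: "w i > b" if i: "2 \<le> i" "i \<le> n+1-b" for i
  proof (rule ccontr)
    assume c: "\<not> b < w i"
    have b2: "b \<ge> 2" using ab a1 by simp
    have iin: "i \<le> n-1" using i b2 by simp
    have nh: "w q \<le> b" if "i \<le> q" "q \<le> n-1" for q
    proof (cases "q = i")
      case True then show ?thesis using c by simp
    next
      case False then show ?thesis using O1[of i q] that i c by force
    qed
    have sub: "{b+1..n} \<subseteq> w ` {2..i-1}"
    proof
      fix v assume v: "v \<in> {b+1..n}"
      then have "v \<in> w ` {1..n}" using surj bn ab a1 by auto
      then obtain x where x: "x\<in>{1..n}" "v = w x" by auto
      have "x \<noteq> 1" "x \<noteq> n" using v x ab a_def b_def by auto
      moreover have "\<not>(i \<le> x \<and> x \<le> n-1)" using nh[of x] v x by auto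
      ultimately have "x \<in> {2..i-1}" using x by auto
      then show "v \<in> w ` {2..i-1}" using x by auto
    qed
    have "card {b+1..n} \<le> card (w`{2..i-1})" by (rule card_mono[OF _ sub]) simp
    also have "\<dots> \<le> card {2..i-1}" by (rule card_image_le) simp
    finally show False using i b2 bn by simp
  qed
  have part3: "w i < a" if i: "n - a + 1 \<le> i" "i \<le> n-1" for i
  proof (rule ccontr)
    assume c: "\<not> w i < a"
    have a2: "a \<ge> 2" using i by simp
    have i2: "2 \<le> i" using i ab bn by simp
    have nl: "w q \<ge> a" if "2 \<le> q" "q \<le> i" for q
    proof (cases "q = i")
      case True then show ?thesis using c by simp
    next
      case False then show ?thesis using O2[of q i] that i c by force
    qed
    have sub: "{1..a-1} \<subseteq> w ` {i+1..n-1}"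
    proof
      fix v assume v: "v \<in> {1..a-1}"
      then have "v \<in> w ` {1..n}" using surj bn ab a1 by auto
      then obtain x where x: "x\<in>{1..n}" "v = w x" by auto
      have "x \<noteq> 1" "x \<noteq> n" using v x ab a_def b_def by auto
      moreover have "\<not>(2 \<le> x \<and> x \<le> i)" using nl[of x] v x by auto
      ultimately have "x \<in> {i+1..n-1}" using x by auto
      then show "v \<in> w ` {i+1..n-1}" using x by auto
    qed
    have "card {1..a-1} \<le> card (w`{i+1..n-1})" by (rule card_mono[OF _ sub]) simp
    also have "\<dots> \<le> card {i+1..n-1}" by (rule card_image_le) simp
    finally show False using i a2 bn by simp
  qed
  have part2: "a < w i \<and> w i < b" if i: "n + 2 - b \<le> i" "i \<le> n - a" for i
  proof -
    have i2: "2 \<le> i" "i \<le> n-1" using i bn a1 by auto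
    have "w i \<noteq> a" "w i \<noteq> b" using ne[of i] i2 by auto
    moreover have "\<not> w i > b"
    proof
      assume c: "w i > b"
      have hh: "w q > b" if "2 \<le> q" "q \<le> i" for q
      proof (cases "q = i")
        case True then show ?thesis using c by simp
      next
        case False then show ?thesis using O1[of q i] that i2 c by force
      qed
      have sub: "w ` {2..i} \<subseteq> {b+1..n}" using hh rng i2 by force
      have "card (w ` {2..i}) = card {2..i}"
        by (rule card_image) (rule inj_on_subset[OF inj], use i2 in auto)
      moreover have "card (w ` {2..i}) \<le> card {b+1..n}" by (rule card_mono[OF _ sub]) simp
      ultimately show False using i i2 bn by simp
    qed
    moreover have "\<not> w i < a"
    proof
      assume c: "w i < a"
      have hh: "w q < a" if "i \<le> q" "q \<le> n-1" for q
      proof (cases "q = i")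
        case True then show ?thesis using c by simp
      next
        case False then show ?thesis using O2[of i q] that i2 c by force
      qed
      have sub: "w ` {i..n-1} \<subseteq> {1..a-1}" using hh rng i2 by force
      have "card (w ` {i..n-1}) = card {i..n-1}"
        by (rule card_image) (rule inj_on_subset[OF inj], use i2 in auto)
      moreover have "card (w ` {i..n-1}) \<le> card {1..a-1}" by (rule card_mono[OF _ sub]) simp
      ultimately show False using i i2 bn by simp
    qed
    ultimately show ?thesis by linarith
  qed
  show ?thesis using part1 part2 part3 unfolding a_def b_def by blast
qed


theorem lemma6p3:
  fixes n :: nat and w :: "nat \<Rightarrow> nat"
  assumes "min_nonseparable n w"
  shows "(w 1 < w n \<longrightarrow>
            (\<forall>i. 2 \<le> i \<and> i \<le> n + 1 - w n \<longrightarrow> w i > w n) \<and>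
            (\<forall>i. n + 2 - w n \<le> i \<and> i \<le> n - w 1 \<longrightarrow> w 1 < w i \<and> w i < w n) \<and>
            (\<forall>i. n - w 1 + 1 \<le> i \<and> i \<le> n - 1 \<longrightarrow> w i < w 1)) \<and>
         (w 1 > w n \<longrightarrow>
            (\<forall>i. 2 \<le> i \<and> i \<le> w n \<longrightarrow> w i < w n) \<and>
            (\<forall>i. w n + 1 \<le> i \<and> i \<le> w 1 - 1 \<longrightarrow> w n < w i \<and> w i < w 1) \<and>
            (\<forall>i. w 1 \<le> i \<and> i \<le> n - 1 \<longrightarrow> w i > w 1))"
proof -
  have perm: "w permutes {1..n}" and nsep: "\<not> separable n w"
    and par: "\<And>J. J \<subset> {1..n-1} \<Longrightarrow> parabolic_separable n w J"
    using assms unfolding min_nonseparable_def by blast+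
  have rng: "\<And>i. i \<in> {1..n} \<Longrightarrow> w i \<in> {1..n}" using permutes_in_image[OF perm] by blast
  have inj: "inj_on w {1..n}" using perm permutes_inj_on by blast
  have occ: "\<exists>i1 i2 i3 i4. 1 \<le> i1 \<and> i1<i2 \<and> i2<i3 \<and> i3<i4 \<and> i4 \<le> n \<and>
      ((w i2 < w i4 \<and> w i4 < w i1 \<and> w i1 < w i3) \<or> (w i3 < w i1 \<and> w i1 < w i4 \<and> w i4 < w i2))"
    using nsep unfolding separable_def separable_list_def pat_map by blast
  then have n2: "n \<ge> 2" by auto
  have B1: "\<not> (\<exists>i1 i2 i3 i4. 2 \<le> i1 \<and> i1<i2 \<and> i2<i3 \<and> i3<i4 \<and> i4 \<le> n \<and>
      ((w i2 < w i4 \<and> w i4 < w i1 \<and> w i1 < w i3) \<or> (w i3 < w i1 \<and> w i1 < w i4 \<and> w i4 < w i2)))"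
  proof -
    have "{2..n-1} \<subset> {1..n-1}" using n2 by auto
    then have "parabolic_separable n w {2..n-1}" by (rule par)
    moreover have "is_block n {2..n-1} 2 n" unfolding is_block_def using n2 by auto
    ultimately have "separable_list (standardize (map w [2..<n+1]))"
      unfolding parabolic_separable_def by blast
    then show ?thesis unfolding separable_list_def pat_std pat_map by blast
  qed
  have B2: "\<not> (\<exists>i1 i2 i3 i4. 1 \<le> i1 \<and> i1<i2 \<and> i2<i3 \<and> i3<i4 \<and> i4 \<le> n-1 \<and>
      ((w i2 < w i4 \<and> w i4 < w i1 \<and> w i1 < w i3) \<or> (w i3 < w i1 \<and> w i1 < w i4 \<and> w i4 < w i2)))"
  proof -
    have "{1..n-2} \<subset> {1..n-1}" using n2 by auto
    then have "parabolic_separable n w {1..n-2}" by (rule par)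
    moreover have "is_block n {1..n-2} 1 (n-1)" unfolding is_block_def using n2 by auto
    ultimately have "separable_list (standardize (map w [1..<(n-1)+1]))"
      unfolding parabolic_separable_def by blast
    then show ?thesis unfolding separable_list_def pat_std pat_map by blast
  qed
  have np: "noPat n w" unfolding noPat_def
  proof (intro allI impI)
    fix i1 i2 i3 i4 :: nat
    assume h: "1 \<le> i1 \<and> i1<i2 \<and> i2<i3 \<and> i3<i4 \<and> i4 \<le> n \<and> (i1 \<noteq> 1 \<or> i4 \<noteq> n)"
    then consider "2 \<le> i1" | "i4 \<le> n-1" by linarith
    then show "\<not>(w i2 < w i4 \<and> w i4 < w i1 \<and> w i1 < w i3) \<and> \<not>(w i3 < w i1 \<and> w i1 < w i4 \<and> w i4 < w i2)"
    proof cases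
      case 1 then show ?thesis using B1 h by blast
    next
      case 2 then show ?thesis using B2 h by blast
    qed
  qed
  from occ obtain i1 i2 i3 i4 where o: "1 \<le> i1" "i1<i2" "i2<i3" "i3<i4" "i4 \<le> n"
    and pt: "(w i2 < w i4 \<and> w i4 < w i1 \<and> w i1 < w i3) \<or> (w i3 < w i1 \<and> w i1 < w i4 \<and> w i4 < w i2)"
    by blast
  have e: "i1 = 1" "i4 = n" using np o pt unfolding noPat_def by blast+
  have C1: "w 1 < w n \<longrightarrow>
            (\<forall>i. 2 \<le> i \<and> i \<le> n + 1 - w n \<longrightarrow> w i > w n) \<and>
            (\<forall>i. n + 2 - w n \<le> i \<and> i \<le> n - w 1 \<longrightarrow> w 1 < w i \<and> w i < w n) \<and>
            (\<forall>i. n - w 1 + 1 \<le> i \<and> i \<le> n - 1 \<longrightarrow> w i < w 1)"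
  proof
    assume lt: "w 1 < w n"
    then have "w i3 < w 1 \<and> w 1 < w n \<and> w n < w i2" using pt e by auto
    then show "(\<forall>i. 2 \<le> i \<and> i \<le> n + 1 - w n \<longrightarrow> w i > w n) \<and>
            (\<forall>i. n + 2 - w n \<le> i \<and> i \<le> n - w 1 \<longrightarrow> w 1 < w i \<and> w i < w n) \<and>
            (\<forall>i. n - w 1 + 1 \<le> i \<and> i \<le> n - 1 \<longrightarrow> w i < w 1)"
      using core[OF inj rng np, of i2 i3] o e by auto
  qed
  have C2: "w 1 > w n \<longrightarrow>
            (\<forall>i. 2 \<le> i \<and> i \<le> w n \<longrightarrow> w i < w n) \<and>
            (\<forall>i. w n + 1 \<le> i \<and> i \<le> w 1 - 1 \<longrightarrow> w n < w i \<and> w i < w 1) \<and>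
            (\<forall>i. w 1 \<le> i \<and> i \<le> n - 1 \<longrightarrow> w i > w 1)"
  proof
    assume gt: "w 1 > w n"
    then have q: "w i2 < w n \<and> w n < w 1 \<and> w 1 < w i3" using pt e by auto
    define v where "v = (\<lambda>i. n + 1 - w i)"
    have vr: "\<And>i. i \<in> {1..n} \<Longrightarrow> v i \<in> {1..n}" using rng unfolding v_def by force
    have vinj: "inj_on v {1..n}"
    proof (rule inj_onI)
      fix x y assume "x \<in> {1..n}" "y \<in> {1..n}" "v x = v y"
      then have "w x = w y" using rng[of x] rng[of y] unfolding v_def by auto
      then show "x = y" using inj_onD[OF inj] \<open>x \<in> {1..n}\<close> \<open>y \<in> {1..n}\<close> by blast
    qed
    have vnp: "noPat n v" unfolding noPat_def
    proof (intro allI impI)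
      fix p1 p2 p3 p4 :: nat
      assume h: "1 \<le> p1 \<and> p1<p2 \<and> p2<p3 \<and> p3<p4 \<and> p4 \<le> n \<and> (p1 \<noteq> 1 \<or> p4 \<noteq> n)"
      have r: "w p1 \<le> n" "w p2 \<le> n" "w p3 \<le> n" "w p4 \<le> n" using rng[of p1] rng[of p2] rng[of p3] rng[of p4] h by auto
      have "\<not>(w p2 < w p4 \<and> w p4 < w p1 \<and> w p1 < w p3) \<and> \<not>(w p3 < w p1 \<and> w p1 < w p4 \<and> w p4 < w p2)"
        using np h unfolding noPat_def by blast
      then show "\<not>(v p2 < v p4 \<and> v p4 < v p1 \<and> v p1 < v p3) \<and> \<not>(v p3 < v p1 \<and> v p1 < v p4 \<and> v p4 < v p2)"
        using r unfolding v_def by linarith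
    qed
    have r1: "1 \<le> w 1" "w 1 \<le> n" "1 \<le> w n" "w n \<le> n" "w i2 \<le> n" "w i3 \<le> n"
      using rng[of 1] rng[of n] rng[of i2] rng[of i3] o e by auto
    have "v i3 < v 1 \<and> v 1 < v n \<and> v n < v i2" using q r1 unfolding v_def by linarith
    then have R: "(\<forall>i. 2 \<le> i \<and> i \<le> n + 1 - v n \<longrightarrow> v i > v n) \<and>
         (\<forall>i. n + 2 - v n \<le> i \<and> i \<le> n - v 1 \<longrightarrow> v 1 < v i \<and> v i < v n) \<and>
         (\<forall>i. n - v 1 + 1 \<le> i \<and> i \<le> n - 1 \<longrightarrow> v i < v 1)"
      using core[OF vinj vr vnp, of i2 i3] o e by auto
    have vn: "n + 1 - v n = w n" "n + 2 - v n = w n + 1" "n - v 1 = w 1 - 1" "n - v 1 + 1 = w 1"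
      using r1 unfolding v_def by auto
    have ri: "\<And>i. 1 \<le> i \<Longrightarrow> i \<le> n \<Longrightarrow> w i \<le> n" using rng by auto
    show "(\<forall>i. 2 \<le> i \<and> i \<le> w n \<longrightarrow> w i < w n) \<and>
            (\<forall>i. w n + 1 \<le> i \<and> i \<le> w 1 - 1 \<longrightarrow> w n < w i \<and> w i < w 1) \<and>
            (\<forall>i. w 1 \<le> i \<and> i \<le> n - 1 \<longrightarrow> w i > w 1)"
    proof (intro conjI allI impI)
      fix i assume i: "2 \<le> i \<and> i \<le> w n"
      then have "v i > v n" using R vn by auto
      moreover have "w i \<le> n" using ri[of i] i r1 by auto
      ultimately show "w i < w n" using r1 unfolding v_def by linarith
    next
      fix i assume i: "w n + 1 \<le> i \<and> i \<le> w 1 - 1"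
      then have "v 1 < v i \<and> v i < v n" using R vn by auto
      moreover have "w i \<le> n" using ri[of i] i r1 by auto
      ultimately show "w n < w i" "w i < w 1" using r1 unfolding v_def by linarith+
    next
      fix i assume i: "w 1 \<le> i \<and> i \<le> n - 1"
      then have "v i < v 1" using R vn by auto
      moreover have "w i \<le> n" using ri[of i] i r1 by auto
      ultimately show "w i > w 1" using r1 unfolding v_def by linarith
    qed
  qed
  show ?thesis using C1 C2 by blast
qed

end
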